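(* Let $T>0$ with $T/\pi\in\mathbb Q$. Let $u:\mathbb R\to L^2_{r,0}$, $u(t)=\mathcal S(t)u_0$, be a solution of the Benjamin–Ono equation with $u_0\in L^2_{r,0}$, and assume $u$ is $T$-periodic, i.e. $u(t+T)=u(t)$ for all $t\in\mathbb R$. Then $u_0$ is a finite gap potential, i.e. there is $N\ge1$ with $\zeta_n(u_0)=0$ for all $n>N$.
   Context: $\mathbb T=\mathbb R/2\pi\mathbb Z$. For $s\in\mathbb R$, $H^s_{r,0}$ is the Sobolev space of real-valued distributions $u$ on $\mathbb T$ with $H^s$-regularity and zero mean ($\hat u(0)=0$); $L^2_{r,0}=H^0_{r,0}$. The Benjamin–Ono (BO) equation is $\partial_tu=H\partial_x^2u-\partial_x(u^2)$, where $H$ is the Hilbert transform, the Fourier multiplier $\hat f(n)\mapsto -i\,\mathrm{sign}(n)\hat f(n)$ (with $0$ at $n=0$). For $\sigma\in\mathbb R$, $h^\sigma_+$ is the space of complex sequences $(z_n)_{n\ge1}$ with $\sum_{n\ge1}n^{2\sigma}|z_n|^2<\infty$. The following known facts are taken as given: for every $s>-1/2$ the BO equation is globally well posed in $H^s_{r,0}$ with continuous solution map $\mathcal S(t)$; there is a map $\Phi:u\mapsto(\zeta_n(u))_{n\ge1}$ (Birkhoff coordinates) which for every $s>-1/2$ is a homeomorphism $H^s_{r,0}\to h^{s+1/2}_+$ (in particular $u\in H^s_{r,0}$ iff $\Phi(u)\in h_+^{s+1/2}$), and for all $u\in H^s_{r,0}$, $n\ge1$, $t\in\mathbb R$, $\zeta_n(\mathcal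 S(t)u)=e^{i\omega_nt}\zeta_n(u)$ with $\omega_n=n^2-2\sum_{k=1}^nk|\zeta_k(u)|^2-2n\sum_{k>n}|\zeta_k(u)|^2$. *)

theory Defs
  imports "HOL-Analysis.Analysis"
begin

text \<open>L^2_{r,0}, represented through Fourier coefficients (Plancherel):
  a sequence c : int -> complex with c 0 = 0 (zero mean), c(-n) = cnj (c n)
  (real valued) and square summable.\<close>
definition L2r0 :: "(int \<Rightarrow> complex) set" where
  "L2r0 = {c. c 0 = 0 \<and> (\<forall>n. c (- n) = cnj (c n)) \<and>
              summable (\<lambda>n::nat. (cmod (c (int n)))\<^sup>2)}"

text \<open>h^sigma_+ : sequences indexed by n >= 1 (index 0 unused and set to 0).\<close>
definition h_plus :: "real \<Rightarrow> (nat \<Rightarrow> complex) set" where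
  "h_plus \<sigma> = {z. z 0 = 0 \<and>
      summable (\<lambda>n::nat. real (Suc n) powr (2 * \<sigma>) * (cmod (z (Suc n)))\<^sup>2)}"

definition bo_freq :: "(nat \<Rightarrow> complex) \<Rightarrow> nat \<Rightarrow> real" where
  "bo_freq z n = real n ^ 2
     - 2 * (\<Sum>k=1..n. real k * (cmod (z k))\<^sup>2)
     - 2 * real n * (\<Sum>k. if n < k then (cmod (z k))\<^sup>2 else 0)"

end

theory Submission
  imports Defs
begin

lemma bo_freq_min:
  fixes z :: "nat \<Rightarrow> complex"
  assumes sc: "summable (\<lambda>k. (cmod (z k))\<^sup>2)" and z0: "z 0 = 0"
  shows "bo_freq z n = real n ^ 2 - 2 * (\<Sum>k. real (min k n) * (cmod (z k))\<^sup>2)"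
proof -
  let ?c = "\<lambda>k. (cmod (z k))\<^sup>2"
  have eq: "(\<lambda>k. real (min k n) * ?c k) = (\<lambda>k. (if k \<le> n then real k * ?c k else 0) + real n * (if n < k then ?c k else 0))"
    by (rule ext) (auto simp: min_def)
  have s1: "summable (\<lambda>k. if k \<le> n then real k * ?c k else 0)"
    by (rule summable_finite[of "{..n}"]) auto
  have s2': "summable (\<lambda>k. if n < k then ?c k else 0)"
    by (rule summable_comparison_test[OF _ sc]) (auto intro!: exI[of _ 0])
  have s2: "summable (\<lambda>k. real n * (if n < k then ?c k else 0))"
    using s2' by (rule summable_mult)
  have f1: "(\<Sum>k. if k \<le> n then real k * ?c k else 0) = (\<Sum>k\<in>{..n}. real k * ?c k)"
    by (subst suminf_finite[of "{..n}"]) auto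
  have f1': "(\<Sum>k\<in>{..n}. real k * ?c k) = (\<Sum>k=1..n. real k * ?c k)"
  proof -
    have "{..n} = insert 0 {1..n}" by auto
    thus ?thesis by simp
  qed
  have "(\<Sum>k. real (min k n) * ?c k) = (\<Sum>k. if k \<le> n then real k * ?c k else 0) + (\<Sum>k. real n * (if n < k then ?c k else 0))"
    unfolding eq by (rule suminf_add[OF s1 s2, symmetric])
  also have "\<dots> = (\<Sum>k=1..n. real k * ?c k) + real n * (\<Sum>k. if n < k then ?c k else 0)"
    using f1 f1' suminf_mult[OF s2'] by simp
  finally show ?thesis unfolding bo_freq_def by simp
qed

lemma F_gap:
  fixes c :: "nat \<Rightarrow> real"
  assumes sc: "summable (\<lambda>k. real k * c k)" and nn: "\<And>k. c k \<ge> 0" and nm: "n < m"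
  shows "(\<Sum>k. real (min k m) * c k) - (\<Sum>k. real (min k n) * c k) \<ge> (real m - real n) * c m"
proof -
  have s: "summable (\<lambda>k. real (min k j) * c k)" for j
    by (rule summable_comparison_test[OF _ sc]) (auto intro!: exI[of _ 0] mult_right_mono simp: nn)
  have "(\<Sum>k. real (min k m) * c k) - (\<Sum>k. real (min k n) * c k) = (\<Sum>k. real (min k m) * c k - real (min k n) * c k)"
    by (rule suminf_diff[OF s s])
  also have "\<dots> \<ge> (\<Sum>k\<in>{m}. real (min k m) * c k - real (min k n) * c k)"
  proof (rule sum_le_suminf[OF summable_diff[OF s s]])
    fix k :: nat
    have "real (min k n) * c k \<le> real (min k m) * c k"
      by (rule mult_right_mono) (use nm in \<open>auto simp: nn\<close>)
    thus "0 \<le> real (min k m) * c k - real (min k n) * c k" by simp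
  qed simp
  finally show ?thesis using nm by (simp add: algebra_simps)
qed

lemma F_bounds:
  fixes c :: "nat \<Rightarrow> real"
  assumes sc: "summable (\<lambda>k. real k * c k)" and nn: "\<And>k. c k \<ge> 0"
  shows "0 \<le> (\<Sum>k. real (min k n) * c k)" "(\<Sum>k. real (min k n) * c k) \<le> (\<Sum>k. real k * c k)"
proof -
  have s: "summable (\<lambda>k. real (min k n) * c k)"
    by (rule summable_comparison_test[OF _ sc]) (auto intro!: exI[of _ 0] mult_right_mono simp: nn)
  show "0 \<le> (\<Sum>k. real (min k n) * c k)" by (rule suminf_nonneg[OF s]) (simp add: nn)
  show "(\<Sum>k. real (min k n) * c k) \<le> (\<Sum>k. real k * c k)"
    by (rule suminf_le[OF _ s sc]) (auto intro!: mult_right_mono simp: nn)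
qed


theorem theorem3p1:
  fixes S :: "real \<Rightarrow> (int \<Rightarrow> complex) \<Rightarrow> (int \<Rightarrow> complex)"
    and \<zeta> :: "(int \<Rightarrow> complex) \<Rightarrow> nat \<Rightarrow> complex"
    and u :: "real \<Rightarrow> (int \<Rightarrow> complex)"
    and u0 :: "int \<Rightarrow> complex"
    and T :: real
  assumes flow_maps: "\<forall>t. \<forall>v\<in>L2r0. S t v \<in> L2r0"
    and flow_zero: "\<forall>v\<in>L2r0. S 0 v = v"
    and Phi_bij: "bij_betw \<zeta> L2r0 (h_plus (1/2))"
    and Phi_evol: "\<forall>v\<in>L2r0. \<forall>n\<ge>1. \<forall>t.
          \<zeta> (S t v) n = exp (\<i> * complex_of_real (bo_freq (\<zeta> v) n * t)) * \<zeta> v n"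
    and T_pos: "T > 0"
    and T_rat: "T / pi \<in> \<rat>"
    and u0_in: "u0 \<in> L2r0"
    and u_sol: "\<forall>t. u t = S t u0"
    and u_per: "\<forall>t. u (t + T) = u t"
  shows "\<exists>N\<ge>1. \<forall>n>N. \<zeta> u0 n = 0"
proof -
  define z where "z = \<zeta> u0"
  define c where "c = (\<lambda>k. (cmod (z k))\<^sup>2)"
  define F where "F = (\<lambda>n. \<Sum>k. real (min k n) * c k)"
  have zin: "z \<in> h_plus (1/2)" unfolding z_def using Phi_bij u0_in by (rule bij_betw_apply)
  hence z0: "z 0 = 0" and sp: "summable (\<lambda>n. real (Suc n) powr (2 * (1/2)) * c (Suc n))"
    unfolding h_plus_def c_def by auto
  have "summable (\<lambda>n. real (Suc n) * c (Suc n))" using sp by simp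
  hence sk: "summable (\<lambda>k. real k * c k)" by (subst (asm) summable_Suc_iff[where f="\<lambda>k. real k * c k"])
  have cnn: "\<And>k. c k \<ge> 0" unfolding c_def by simp
  have sc: "summable c"
  proof (rule summable_comparison_test[OF _ sk], intro exI[of _ 0] allI impI)
    fix k :: nat
    show "norm (c k) \<le> real k * c k"
    proof (cases "k = 0")
      case True thus ?thesis using z0 by (simp add: c_def)
    next
      case False hence "real k \<ge> 1" by simp
      hence "1 * c k \<le> real k * c k" by (rule mult_right_mono) (simp add: cnn)
      thus ?thesis using cnn[of k] by simp
    qed
  qed
  have om: "bo_freq z n = real n ^ 2 - 2 * F n" for n
    unfolding F_def c_def by (rule bo_freq_min) (use sc z0 in \<open>auto simp: c_def\<close>)
  have fix0: "S T u0 = u0"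
    using u_sol u_per[rule_format, of 0] flow_zero u0_in by auto
  obtain a b :: int where b0: "b > 0" and ab: "T / pi = of_int a / of_int b"
    using T_rat by (elim Rats_cases') auto
  have Tab: "T = pi * of_int a / of_int b" using ab by (simp add: field_simps)
  have a0: "a > 0"
  proof -
    have "of_int a / of_int b > (0::real)" using ab T_pos by (metis divide_pos_pos pi_gt_zero)
    thus ?thesis using b0 by (simp add: zero_less_divide_iff)
  qed
  define h where "h = (\<lambda>n. 2 * F n * of_int a)"
  define Z where "Z = {n. 1 \<le> n \<and> z n \<noteq> 0}"
  have hint: "h n \<in> \<int>" if "n \<in> Z" for n
  proof -
    have n1: "n \<ge> 1" and zn: "z n \<noteq> 0" using that by (auto simp: Z_def)
    have "z n = exp (\<i> * complex_of_real (bo_freq z n * T)) * z n"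
      using Phi_evol u0_in n1 fix0 unfolding z_def by metis
    hence "exp (\<i> * complex_of_real (bo_freq z n * T)) = 1" using zn by simp
    then obtain k :: int where k: "bo_freq z n * T = of_int (2 * k) * pi"
      unfolding exp_eq_1 by auto
    hence "bo_freq z n * of_int a = 2 * of_int k * of_int b"
      using b0 unfolding Tab by (simp add: field_simps)
    hence "h n = of_int (int n ^ 2 * a - 2 * k * b)"
      unfolding h_def using om[of n] by (simp add: algebra_simps)
    thus ?thesis by simp
  qed
  define A where "A = (\<Sum>k. real k * c k)"
  have hb: "0 \<le> h n" "h n \<le> 2 * A * of_int a" for n
    using F_bounds[OF sk cnn, of n] a0 unfolding h_def F_def A_def by auto
  have "h ` Z \<subseteq> of_int ` {0..\<lceil>2 * A * of_int a\<rceil>}"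
  proof
    fix x assume "x \<in> h ` Z"
    then obtain n where n: "n \<in> Z" "x = h n" by auto
    then obtain m where m: "h n = of_int m" using hint by (metis Ints_cases)
    have "real_of_int m \<le> of_int \<lceil>2 * A * of_int a\<rceil>"
      using hb(2)[of n] m le_of_int_ceiling[of "2 * A * of_int a"] by linarith
    hence "0 \<le> m" "m \<le> \<lceil>2 * A * of_int a\<rceil>" using hb(1)[of n] m by simp_all
    thus "x \<in> of_int ` {0..\<lceil>2 * A * of_int a\<rceil>}" using n m by auto
  qed
  hence fin1: "finite (h ` Z)" by (rule finite_subset) auto
  have inj: "inj_on h Z"
  proof -
    have lt: "h n < h m" if "n \<in> Z" "m \<in> Z" "n < m" for n m
    proof -
      have "c m > 0" using that(2) by (simp add: Z_def c_def)
      hence "(real m - real n) * c m > 0" using that(3) by simp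
      hence "F n < F m" using F_gap[OF sk cnn that(3)] unfolding F_def by simp
      thus ?thesis unfolding h_def using a0 by simp
    qed
    show ?thesis unfolding inj_on_def
      by (metis lt linorder_neq_iff order_less_irrefl)
  qed
  have finZ: "finite Z" using finite_imageD[OF fin1 inj] .
  define N where "N = Max (insert 1 Z)"
  have "N \<ge> 1" unfolding N_def using finZ by simp
  moreover have "\<forall>n>N. \<zeta> u0 n = 0"
  proof (intro allI impI)
    fix n assume "n > N"
    hence "n \<notin> Z" "n \<ge> 1" unfolding N_def using finZ
      by (auto simp: not_le dest: Max_ge[of "insert 1 Z" n])
    thus "\<zeta> u0 n = 0" by (auto simp: Z_def z_def)
  qed
  ultimately show ?thesis by blast
qed

end
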